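(* There exist real numbers $\delta,\varepsilon$ with $0<\delta<\varepsilon<1/2$ and an integer $n>1$ such that $P_{\varepsilon,\delta}$ is a quantum system and $\mathrm{NDP}_n(P_{\varepsilon,\delta})$ is a non-locality-distillation protocol, i.e. $NL[P_{\varepsilon,\delta}^n]>NL[P_{\varepsilon,\delta}]>2$.
   Context: A binary-input/binary-output bipartite system is a conditional probability distribution $P(ab|xy)$ with $a,b,x,y\in\{0,1\}$ ($x,a$ Alice's input/output, $y,b$ Bob's). Correlation functions: $X_{xy}(P)=P(00|xy)+P(11|xy)-P(01|xy)-P(10|xy)$. CHSH non-locality: $NL[P]=\max_{x,y\in\{0,1\}}|X_{xy}(P)+X_{x\bar y}(P)+X_{\bar x y}(P)-X_{\bar x\bar y}(P)|$, with $\bar0=1,\bar1=0$. A system $P$ is a quantum system if there exist Hilbert spaces $H_A,H_B$, a density operator $\rho$ on $H_A\otimes H_B$, and for each $x\in\{0,1\}$ a two-outcome POVM $\{E^x_a\}_{a\in\{0,1\}}$ on $H_A$ and for each $y$ a two-outcome POVM $\{F^y_b\}_{b\in\{0,1\}}$ on $H_B$ with $P(ab|xy)=\mathrm{tr}(\rho\,(E^x_a\otimes F^y_b))$ for all $a,b,x,y$. Protocol $\mathrm{NDP}_n(P)$: on inputs $x,y$ the parties feed $x$ and $y$ into each of $n$ independent copies of $P$, obtaining $(a_i,b_i)\sim P(a_ib_i|xy)$ independently for $i=1,\dots,n$, and output $a=a_1\oplus\cdots\oplus a_n$, $b=b_1\oplus\cdots\oplus b_n$; the induced distribution of $(a,b)$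 given $(x,y)$ is $P^n$. A non-locality-distillation protocol is one for which $NL[P^n]>NL[P]>2$. For $0\le\varepsilon,\delta\le 1$, $P_{\varepsilon,\delta}$ is the system with $P_{\varepsilon,\delta}(00|xy)=P_{\varepsilon,\delta}(11|xy)=(1-\delta)/2$, $P_{\varepsilon,\delta}(01|xy)=P_{\varepsilon,\delta}(10|xy)=\delta/2$ for $xy\in\{00,01,10\}$, and $P_{\varepsilon,\delta}(00|11)=P_{\varepsilon,\delta}(11|11)=(1-\varepsilon)/2$, $P_{\varepsilon,\delta}(01|11)=P_{\varepsilon,\delta}(10|11)=\varepsilon/2$. *)

theory Defs
  imports Complex_Main "Jordan_Normal_Form.Matrix" "Jordan_Normal_Form.Conjugate"
begin

text \<open>A binary-input/binary-output bipartite system: P a b x y = P(ab|xy), with a,b,x,y in {0,1}.\<close>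
type_synonym system = "nat \<Rightarrow> nat \<Rightarrow> nat \<Rightarrow> nat \<Rightarrow> real"

definition corr :: "system \<Rightarrow> nat \<Rightarrow> nat \<Rightarrow> real" where
  "corr P x y = P 0 0 x y + P 1 1 x y - P 0 1 x y - P 1 0 x y"

definition bnot :: "nat \<Rightarrow> nat" where
  "bnot x = 1 - x"

definition NL :: "system \<Rightarrow> real" where
  "NL P = Max {\<bar>corr P x y + corr P x (bnot y) + corr P (bnot x) y - corr P (bnot x) (bnot y)\<bar>
               | x y. x \<in> {0,1} \<and> y \<in> {0,1}}"

text \<open>The protocol NDP_n: n independent copies fed with the same inputs, outputs XOR-ed.\<close>
definition NDP :: "nat \<Rightarrow> system \<Rightarrow> system" where
  "NDP n P a b x y =
     (\<Sum>as\<in>{as. length as = n \<and> set as \<subseteq> {0,1}}.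
        \<Sum>bs\<in>{bs. length bs = n \<and> set bs \<subseteq> {0,1}}.
          if sum_list as mod 2 = a \<and> sum_list bs mod 2 = b
          then (\<Prod>i<n. P (as ! i) (bs ! i) x y) else 0)"

definition Peps :: "real \<Rightarrow> real \<Rightarrow> system" where
  "Peps \<epsilon> \<delta> a b x y =
     (if x = 1 \<and> y = 1 then (if a = b then (1 - \<epsilon>) / 2 else \<epsilon> / 2)
      else (if a = b then (1 - \<delta>) / 2 else \<delta> / 2))"

definition mtrace :: "complex mat \<Rightarrow> complex" where
  "mtrace A = (\<Sum>i<dim_row A. A $$ (i, i))"

definition psd :: "nat \<Rightarrow> complex mat \<Rightarrow> bool" where
  "psd d A \<longleftrightarrow> A \<in> carrier_mat d d \<and>
     (\<forall>v\<in>carrier_vec d. Im (conjugate v \<bullet> (A *\<^sub>v v)) = 0 \<and> Re (conjugate v \<bullet> (A *\<^sub>v v)) \<ge> 0)"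

definition density :: "nat \<Rightarrow> complex mat \<Rightarrow> bool" where
  "density d \<rho> \<longleftrightarrow> psd d \<rho> \<and> mtrace \<rho> = 1"

definition povm2 :: "nat \<Rightarrow> (nat \<Rightarrow> complex mat) \<Rightarrow> bool" where
  "povm2 d E \<longleftrightarrow> psd d (E 0) \<and> psd d (E 1) \<and> E 0 + E 1 = 1\<^sub>m d"

definition kron :: "complex mat \<Rightarrow> complex mat \<Rightarrow> complex mat" where
  "kron A B = mat (dim_row A * dim_row B) (dim_col A * dim_col B)
     (\<lambda>(i, j). A $$ (i div dim_row B, j div dim_col B) * B $$ (i mod dim_row B, j mod dim_col B))"

definition quantum_system :: "system \<Rightarrow> bool" where
  "quantum_system P \<longleftrightarrow>
     (\<exists>dA dB \<rho> E F. 0 < dA \<and> 0 < dB \<and> density (dA * dB) \<rho> \<and>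
        (\<forall>x\<in>{0,1}. povm2 dA (E x)) \<and> (\<forall>y\<in>{0,1}. povm2 dB (F y)) \<and>
        (\<forall>a\<in>{0,1}. \<forall>b\<in>{0,1}. \<forall>x\<in>{0,1}. \<forall>y\<in>{0,1}.
           complex_of_real (P a b x y) = mtrace (\<rho> * kron (E x a) (F y b))))"

end

theory Submission
  imports Defs
begin


lemma quad: assumes "A \<in> carrier_mat n n" "v \<in> carrier_vec n"
  shows "conjugate v \<bullet> (A *\<^sub>v v) = (\<Sum>i<n. cnj (v$i) * (\<Sum>j<n. A$$(i,j) * v$j))"
  using assms by (auto simp: scalar_prod_def mult_mat_vec_def row_def lessThan_atLeast0 intro!: sum.cong)

definition M2 :: "real \<Rightarrow> real \<Rightarrow> real \<Rightarrow> complex mat" where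
  "M2 a b c = mat 2 2 (\<lambda>(i,j). complex_of_real (if i=0\<and>j=0 then a else if i=1\<and>j=1 then b else c))"

lemma M2_carrier: "M2 a b c \<in> carrier_mat 2 2" by (simp add: M2_def)

lemma M2_ent: "M2 a b c $$ (0,0) = a" "M2 a b c $$ (1,1) = b" "M2 a b c $$ (0,1) = c" "M2 a b c $$ (1,0) = c"
  by (simp_all add: M2_def)
lemma M2_ent': "M2 a b c $$ (Suc 0,Suc 0) = b" "M2 a b c $$ (0,Suc 0) = c" "M2 a b c $$ (Suc 0,0) = c"
  by (simp_all add: M2_def)

lemma sum2: "(\<Sum>i<2. f i) = f 0 + f (1::nat)" by (simp add: numeral_2_eq_2)
lemma sum4: "(\<Sum>i<4. f i) = f 0 + f 1 + f 2 + f (3::nat)" by (simp add: eval_nat_numeral)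

lemma psdM2: assumes "a \<ge> 0" "b \<ge> 0" "c^2 \<le> a*b" shows "psd 2 (M2 a b c)"
  unfolding psd_def
proof (intro conjI ballI M2_carrier)
  fix v :: "complex vec" assume v: "v \<in> carrier_vec 2"
  define p1 where "p1 = Re (v$0)" define q1 where "q1 = Im (v$0)"
  define p2 where "p2 = Re (v$1)" define q2 where "q2 = Im (v$1)"
  have e: "conjugate v \<bullet> (M2 a b c *\<^sub>v v) = cnj (v$0) * (a * v$0 + c * v$1) + cnj (v$1) * (c * v$0 + b*v$1)"
    by (simp add: quad[OF M2_carrier v] sum2 M2_ent M2_ent')
  show "Im (conjugate v \<bullet> (M2 a b c *\<^sub>v v)) = 0" unfolding e by (simp add: algebra_simps)
  have r: "Re (conjugate v \<bullet> (M2 a b c *\<^sub>v v)) = (a*p1*p1 + b*p2*p2 + 2*c*p1*p2) + (a*q1*q1 + b*q2*q2 + 2*c*q1*q2)"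
    unfolding e p1_def p2_def q1_def q2_def by (simp add: algebra_simps)
  have k: "a*x*x + b*y*y + 2*c*x*y \<ge> 0" for x y :: real
  proof (cases "a = 0")
    case True then have "c^2 \<le> 0" using assms by simp
    then have "c = 0" by (metis power2_less_eq_zero_iff)
    then show ?thesis using True assms by (simp add: mult.assoc)
  next
    case False then have "a > 0" using assms by simp
    have "a*(a*x*x + b*y*y + 2*c*x*y) = (a*x + c*y)^2 + (a*b - c^2)*y*y"
      by (simp add: power2_eq_square algebra_simps)
    also have "\<dots> \<ge> 0" using assms by (simp add: mult.assoc)
    finally show ?thesis using \<open>a > 0\<close> by (simp add: zero_le_mult_iff)
  qed
  show "Re (conjugate v \<bullet> (M2 a b c *\<^sub>v v)) \<ge> 0" unfolding r using k[of p1 p2] k[of q1 q2] by linarith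
qed

definition rho :: "complex mat" where
  "rho = mat 4 4 (\<lambda>(i,j). if (i=0\<or>i=3)\<and>(j=0\<or>j=3) then 1/2 else 0)"

lemma rho_density: "density (2*2) rho"
  unfolding density_def psd_def
proof (intro conjI ballI)
  show "rho \<in> carrier_mat (2*2) (2*2)" by (simp add: rho_def)
  fix v :: "complex vec" assume v: "v \<in> carrier_vec (2*2)"
  have e: "conjugate v \<bullet> (rho *\<^sub>v v) = (cnj (v$0) + cnj (v$3)) * (v$0 + v$3) / 2"
  proof -
    have c: "rho \<in> carrier_mat 4 4" by (simp add: rho_def)
    have v4: "v \<in> carrier_vec 4" using v by simp
    show ?thesis unfolding quad[OF c v4] by (simp add: rho_def sum4 algebra_simps add_divide_distrib)
  qed
  show "Im (conjugate v \<bullet> (rho *\<^sub>v v)) = 0" unfolding e by (simp add: algebra_simps)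
  have sq: "0 \<le> (Re (v$0) + Re (v$3))^2 + (Im (v$0) + Im (v$3))^2" by simp
  show "Re (conjugate v \<bullet> (rho *\<^sub>v v)) \<ge> 0" unfolding e
    using sq by (simp add: algebra_simps power2_eq_square)
next
  show "mtrace rho = 1" by (simp add: mtrace_def rho_def sum4)
qed

lemma trace_kron: assumes "A \<in> carrier_mat 2 2" "B \<in> carrier_mat 2 2"
  shows "mtrace (rho * kron A B) = (A$$(0,0)*B$$(0,0) + A$$(1,1)*B$$(1,1) + A$$(0,1)*B$$(0,1) + A$$(1,0)*B$$(1,0))/2"
  using assms by (simp add: mtrace_def rho_def kron_def times_mat_def scalar_prod_def sum4 lessThan_atLeast0[symmetric] algebra_simps add_divide_distrib)

definition Mp :: "real \<Rightarrow> real \<Rightarrow> real \<Rightarrow> complex mat" where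
  "Mp s z x = M2 ((1+s*z)/2) ((1-s*z)/2) (s*x/2)"

lemma psdMp: assumes "s = 1 \<or> s = -1" "z^2 + x^2 = 1" shows "psd 2 (Mp s z x)"
  unfolding Mp_def
proof (rule psdM2)
  have "z^2 \<le> 1" using assms(2) by (smt (verit) zero_le_power2)
  then have "\<bar>z\<bar> \<le> 1" by (simp add: abs_square_le_1)
  then show "0 \<le> (1+s*z)/2" "0 \<le> (1-s*z)/2" using assms(1) by auto
  have "(s*x/2)^2 = x^2/4" using assms(1) by (auto simp: power2_eq_square)
  also have "\<dots> = ((1+s*z)/2) * ((1-s*z)/2)" using assms
    by (auto simp: power2_eq_square field_simps)
  finally show "(s*x/2)^2 \<le> ((1+s*z)/2) * ((1-s*z)/2)" by simp
qed

lemma povmMp: assumes "z^2 + x^2 = 1" shows "povm2 2 (\<lambda>a. Mp (if a = 0 then 1 else -1) z x)"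
proof -
  have p1: "psd 2 (Mp 1 z x)" using psdMp[OF _ assms] by simp
  have p2: "psd 2 (Mp (-1) z x)" using psdMp[OF _ assms] by simp
  have s: "Mp 1 z x + Mp (-1) z x = 1\<^sub>m 2"
    by (rule eq_matI) (auto simp: Mp_def M2_def less_2_cases_iff add_divide_distrib[symmetric])
  show ?thesis unfolding povm2_def using p1 p2 s by simp
qed

lemma traceMp: "mtrace (rho * kron (Mp s z x) (Mp t z' x')) = complex_of_real ((1 + s*t*(z*z'+x*x'))/4)"
  unfolding Mp_def trace_kron[OF M2_carrier M2_carrier] M2_ent
  by (simp add: field_simps)

definition sg :: "nat \<Rightarrow> real" where "sg a = (if a = 0 then 1 else -1)"
definition az :: "nat \<Rightarrow> real" where "az x = (if x = 0 then 1 else 119/169)"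
definition ax :: "nat \<Rightarrow> real" where "ax x = (if x = 0 then 0 else 120/169)"
definition bx :: "nat \<Rightarrow> real" where "bx y = (if y = 0 then 5/13 else -5/13)"

lemma quantum: "quantum_system (Peps (1369/4394) (1/26))"
  unfolding quantum_system_def
proof (intro exI conjI)
  show "density (2*2) rho" by (rule rho_density)
  show "\<forall>x\<in>{0,1}. povm2 2 ((\<lambda>x a. Mp (sg a) (az x) (ax x)) x)"
    unfolding sg_def using povmMp by (auto simp: az_def ax_def power2_eq_square)
  show "\<forall>y\<in>{0,1}. povm2 2 ((\<lambda>y b. Mp (sg b) (12/13) (bx y)) y)"
    unfolding sg_def using povmMp by (auto simp: bx_def power2_eq_square)
  show "\<forall>a\<in>{0,1}. \<forall>b\<in>{0,1}. \<forall>x\<in>{0,1}. \<forall>y\<in>{0,1}.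
           complex_of_real (Peps (1369/4394) (1/26) a b x y) =
           mtrace (rho * kron ((\<lambda>x a. Mp (sg a) (az x) (ax x)) x a) ((\<lambda>y b. Mp (sg b) (12/13) (bx y)) y b))"
    unfolding traceMp by (auto simp: Peps_def sg_def az_def ax_def bx_def)
qed auto



lemma lists2: "{as::nat list. length as = 2 \<and> set as \<subseteq> {0,1}} = {[0,0],[0,1],[1,0],[1,1]}"
proof (intro Set.set_eqI iffI)
  fix as :: "nat list" assume "as \<in> {as. length as = 2 \<and> set as \<subseteq> {0,1}}"
  then obtain u v where "as = [u,v]" "u \<in> {0,1}" "v \<in> {0,1}"
    by (auto simp: length_Suc_conv numeral_2_eq_2)
  then show "as \<in> {[0,0],[0,1],[1,0],[1,1]}" by auto
qed auto

lemma NL4: "NL P = Max {\<bar>corr P 0 0 + corr P 0 1 + corr P 1 0 - corr P 1 1\<bar>,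
   \<bar>corr P 0 1 + corr P 0 0 + corr P 1 1 - corr P 1 0\<bar>,
   \<bar>corr P 1 0 + corr P 1 1 + corr P 0 0 - corr P 0 1\<bar>,
   \<bar>corr P 1 1 + corr P 1 0 + corr P 0 1 - corr P 0 0\<bar>}"
  unfolding NL_def
  apply (rule arg_cong[where f=Max])
  apply (intro Set.set_eqI iffI)
   apply (auto simp: bnot_def)[1]
  apply (simp only: insert_iff empty_iff)
  apply (elim disjE)
  apply (simp only: mem_Collect_eq, rule exI[where x=0], rule exI[where x=0], simp add: bnot_def)
  apply (simp only: mem_Collect_eq, rule exI[where x=0], rule exI[where x=1], simp add: bnot_def)
  apply (simp only: mem_Collect_eq, rule exI[where x=1], rule exI[where x=0], simp add: bnot_def)
  apply (simp only: mem_Collect_eq, rule exI[where x=1], rule exI[where x=1], simp add: bnot_def)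
  apply simp
  done

definition c0 :: real where "c0 = 1369/4394"
definition d0 :: real where "d0 = 1/26"

lemma corrP: "corr (Peps e d) x y = (if x = 1 \<and> y = 1 then 1 - 2*e else 1 - 2*d)"
  by (simp add: corr_def Peps_def field_simps)

lemma NL1: "NL (Peps (1369/4394) (1/26)) = 5256/2197"
  unfolding NL4 corrP by simp

lemma NDP2: "NDP 2 P a b x y = (\<Sum>as\<in>{[0,0],[0,1],[1,0],[1,1]}. \<Sum>bs\<in>{[0,0],[0,1],[1,0],[1,1]}.
          if sum_list as mod 2 = a \<and> sum_list bs mod 2 = b
          then (\<Prod>i<2. P (as ! i) (bs ! i) x y) else 0)"
  unfolding NDP_def lists2 ..

lemma corrN: "corr (NDP 2 P) x y = (corr P x y)^2"
  unfolding corr_def NDP2 by (simp add: numeral_2_eq_2 power2_eq_square algebra_simps)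

lemma NL2: "NL (NDP 2 (Peps (1369/4394) (1/26))) > 5256/2197"
  unfolding NL4 corrN corrP by (simp add: power2_eq_square)

theorem theorem2:
  shows "\<exists>\<delta> \<epsilon> :: real. 0 < \<delta> \<and> \<delta> < \<epsilon> \<and> \<epsilon> < 1/2 \<and>
    (\<exists>n::nat. n > 1 \<and> quantum_system (Peps \<epsilon> \<delta>) \<and>
       NL (NDP n (Peps \<epsilon> \<delta>)) > NL (Peps \<epsilon> \<delta>) \<and> NL (Peps \<epsilon> \<delta>) > 2)"
  apply (rule exI[where x="1/26"], rule exI[where x="1369/4394"])
  apply (intro conjI)
     apply simp_all
  apply (rule exI[where x=2])
  using quantum NL1 NL2 by simp

end
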